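(* Let $p$ be a prime, $n = ms$, and $B \in \mathbb{Z}_p^{n\times n}$ nonsingular, and let $u\in\mathbb{Z}_p^{s\times n}$, $v\in\mathbb{Z}_p^{n\times s}$ be such that $U$ (block rows $u, uB, \dots, uB^{m-1}$) and $V = [v \mid Bv\mid\cdots\mid B^{m-1}v]$ are nonsingular, and let $H = UBV$. Suppose: (i) for any $w \in \mathbb{Z}_p^{n}$ the product $Bw$ can be computed with $\mu(n)$ operations in $\mathbb{Z}_p$; (ii) for any $w\in\mathbb{Z}_p^n$ and $x \in \mathbb{Z}_p^{s}$ the products $uw$ and $vx$ can be computed with $\tilde O(n)$ operations in $\mathbb{Z}_p$; (iii) a representation of $H^{-1}$ has been precomputed which allows $H^{-1}y$ to be computed for any $y \in \mathbb{Z}_p^n$ with $\tilde O(ns)$ operations in $\mathbb{Z}_p$. Then for any $w \in \mathbb{Z}_p^{n}$, the vector $B^{-1}w$ can be computed with $2(m-1)\mu(n) + \tilde O(n(m+s))$ operations in $\mathbb{Z}_p$.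
   Context: $\tilde O(f)$ denotes $O(f \cdot (\log f)^{c})$ for some constant $c$, i.e. big-O up to polylogarithmic factors. *)

theory Defs
  imports "Jordan_Normal_Form.Determinant" "HOL-Computational_Algebra.Primes"
begin

text \<open>Arithmetic over Z_p is modelled on integers with reduction mod p.
  Algorithms are straight-line programs over Z_p with black-box bbox calls
  (B, u, v and the precomputed representation of H inverse).  The store is a
  list of field elements; the input vector w occupies the first n cells.\<close>

datatype instr =
    Cst int | Add nat nat | Sub nat nat | Mul nat nat | Dv nat nat
  | CallB "nat list" | CallU "nat list" | CallV "nat list" | CallH "nat list"

type_synonym bbox = "int list \<Rightarrow> int list"

type_synonym prog = "instr list \<times> nat list"

definition fetch :: "int list \<Rightarrow> nat \<Rightarrow> int" where
  "fetch st i = (if i < length st then st ! i else 0)"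

fun step :: "int \<Rightarrow> bbox \<Rightarrow> bbox \<Rightarrow> bbox \<Rightarrow> bbox \<Rightarrow> int list \<Rightarrow> instr \<Rightarrow> int list" where
  "step p oB oU oV oH st (Cst c) = st @ [c mod p]"
| "step p oB oU oV oH st (Add i j) = st @ [(fetch st i + fetch st j) mod p]"
| "step p oB oU oV oH st (Sub i j) = st @ [(fetch st i - fetch st j) mod p]"
| "step p oB oU oV oH st (Mul i j) = st @ [(fetch st i * fetch st j) mod p]"
| "step p oB oU oV oH st (Dv i j) = st @ [(fetch st i * fetch st j ^ (nat p - 2)) mod p]"
| "step p oB oU oV oH st (CallB is) = st @ oB (map (fetch st) is)"
| "step p oB oU oV oH st (CallU is) = st @ oU (map (fetch st) is)"
| "step p oB oU oV oH st (CallV is) = st @ oV (map (fetch st) is)"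
| "step p oB oU oV oH st (CallH is) = st @ oH (map (fetch st) is)"

definition run :: "int \<Rightarrow> bbox \<Rightarrow> bbox \<Rightarrow> bbox \<Rightarrow> bbox \<Rightarrow> prog \<Rightarrow> int list \<Rightarrow> int list" where
  "run p oB oU oV oH P w =
     (let st = fold (\<lambda>ins st. step p oB oU oV oH st ins) (fst P) w
      in map (fetch st) (snd P))"

fun icost :: "real \<Rightarrow> real \<Rightarrow> real \<Rightarrow> real \<Rightarrow> instr \<Rightarrow> real" where
  "icost mu cU cV cH (CallB _) = mu"
| "icost mu cU cV cH (CallU _) = cU"
| "icost mu cU cV cH (CallV _) = cV"
| "icost mu cU cV cH (CallH _) = cH"
| "icost mu cU cV cH _ = 1"

definition cost :: "real \<Rightarrow> real \<Rightarrow> real \<Rightarrow> real \<Rightarrow> prog \<Rightarrow> real" where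
  "cost mu cU cV cH P = sum_list (map (icost mu cU cV cH) (fst P))"

definition in_range :: "int \<Rightarrow> int list \<Rightarrow> bool" where
  "in_range p xs \<longleftrightarrow> (\<forall>x\<in>set xs. 0 \<le> x \<and> x < p)"

definition mvp :: "int \<Rightarrow> int mat \<Rightarrow> int list \<Rightarrow> int list" where
  "mvp p A x = list_of_vec (map_vec (\<lambda>a. a mod p) (A *\<^sub>v vec_of_list x))"

definition nonsingular_modp :: "int \<Rightarrow> int mat \<Rightarrow> bool" where
  "nonsingular_modp p A \<longleftrightarrow> det A mod p \<noteq> 0"

text \<open>U has block rows u, uB, ..., uB^(m-1); V = [v | Bv | ... | B^(m-1) v].\<close>
definition blockU :: "nat \<Rightarrow> nat \<Rightarrow> int mat \<Rightarrow> int mat \<Rightarrow> int mat" where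
  "blockU m s B u = mat (m * s) (dim_col u) (\<lambda>(i, j). (u * B ^\<^sub>m (i div s)) $$ (i mod s, j))"

definition blockV :: "nat \<Rightarrow> nat \<Rightarrow> int mat \<Rightarrow> int mat \<Rightarrow> int mat" where
  "blockV m s B v = mat (dim_row v) (m * s) (\<lambda>(i, j). (B ^\<^sub>m (j div s) * v) $$ (i, j mod s))"

text \<open>Soft-O shape: x * (log x)^K, with +2 to keep the logarithm positive.\<close>
definition otil :: "nat \<Rightarrow> nat \<Rightarrow> real" where
  "otil K x = real x * (log 2 (real x + 2)) ^ K"

end

theory Submission
  imports Defs
begin


definition md :: "int \<Rightarrow> int vec \<Rightarrow> int vec" where
  "md p x = map_vec (\<lambda>a. a mod p) x"

lemma md_md[simp]: "md p (md p x) = md p x" by (auto simp: md_def)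
lemma dim_md[simp]: "dim_vec (md p x) = dim_vec x" by (simp add: md_def)

lemma scalar_md: assumes "dim_vec y = dim_vec x"
  shows "(y \<bullet> md p x) mod p = (y \<bullet> x) mod p"
proof -
  have "(y \<bullet> md p x) mod p = (\<Sum>i\<in>{0..<dim_vec x}. y $ i * (x $ i mod p)) mod p"
    using assms by (simp add: scalar_prod_def md_def)
  also have "\<dots> = (\<Sum>i\<in>{0..<dim_vec x}. (y $ i * (x $ i mod p)) mod p) mod p"
    by (simp add: mod_sum_eq)
  also have "\<dots> = (\<Sum>i\<in>{0..<dim_vec x}. (y $ i * x $ i) mod p) mod p"
    by (simp add: mod_mult_right_eq)
  also have "\<dots> = (y \<bullet> x) mod p"
    using assms by (simp add: mod_sum_eq scalar_prod_def)
  finally show ?thesis .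
qed

lemma md_mult: assumes "A \<in> carrier_mat k l" "dim_vec x = l"
  shows "md p (A *\<^sub>v md p x) = md p (A *\<^sub>v x)"
proof (rule eq_vecI)
  fix i assume "i < dim_vec (md p (A *\<^sub>v x))"
  then have i: "i < k" using assms by simp
  have "dim_vec (row A i) = dim_vec x" using assms by simp
  from scalar_md[OF this, of p] show "md p (A *\<^sub>v md p x) $ i = md p (A *\<^sub>v x) $ i"
    using i assms by (simp add: md_def)
qed (use assms in simp)


lemma mvp_alt: "mvp p A x = list_of_vec (md p (A *\<^sub>v vec_of_list x))"
  by (simp add: mvp_def md_def)

lemma length_mvp[simp]: "length (mvp p A x) = dim_row A"
  by (simp add: mvp_def)

lemma mvp_nth: "i < dim_row A \<Longrightarrow> mvp p A x ! i = (row A i \<bullet> vec_of_list x) mod p"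
  by (simp add: mvp_def list_of_vec_index)

lemma in_range_mvp: "p > 0 \<Longrightarrow> in_range p (mvp p A x)"
  by (auto simp: in_range_def mvp_def in_set_conv_nth list_of_vec_index)

lemma mvp_mvp: assumes "A \<in> carrier_mat k l" "B \<in> carrier_mat l r" "length x = r"
  shows "mvp p A (mvp p B x) = mvp p (A * B) x"
proof -
  have xc: "vec_of_list x \<in> carrier_vec r" using assms(3) by (intro carrier_vecI) simp
  have e: "A *\<^sub>v (B *\<^sub>v vec_of_list x) = (A * B) *\<^sub>v vec_of_list x"
    by (rule assoc_mult_mat_vec[symmetric, OF assms(1,2) xc])
  have d: "dim_vec (B *\<^sub>v vec_of_list x) = l" using assms(2) by auto
  show ?thesis
    unfolding mvp_alt[of p A] mvp_alt[of p B] mvp_alt[of p "A*B"] vec_list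
      md_mult[OF assms(1) d] e ..
qed


lemma md_id: "in_range p w \<Longrightarrow> md p (vec_of_list w) = vec_of_list w"
  by (auto simp: md_def in_range_def intro!: eq_vecI)
     (metis nth_mem vec_of_list_index mod_pos_pos_trivial)

lemma mvp_one: assumes "in_range p w" shows "mvp p (1\<^sub>m (length w)) w = w"
proof -
  have "vec_of_list w \<in> carrier_vec (length w)" by (intro carrier_vecI) simp
  then have "1\<^sub>m (length w) *\<^sub>v vec_of_list w = vec_of_list w" by (rule one_mult_mat_vec)
  then show ?thesis using md_id[OF assms] by (simp only: mvp_alt list_vec)
qed

lemma pow_comm: assumes "B \<in> carrier_mat n n" shows "B * B ^\<^sub>m k = B ^\<^sub>m Suc k"
proof (induction k)
  case 0 then show ?case using assms by simp
next
  case (Suc k)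
  have "B * B ^\<^sub>m Suc k = (B * B ^\<^sub>m k) * B"
    using assms by (simp add: assoc_mult_mat[symmetric, of B n n _ n B n])
  also have "\<dots> = B ^\<^sub>m Suc (Suc k)" using Suc by simp
  finally show ?case .
qed

lemma concat_blk: assumes "\<forall>j<T. length (f j) = n" "j < T"
  shows "concat (map f [0..<T]) = concat (map f [0..<j]) @ f j @ concat (map f [Suc j..<T])"
    "length (concat (map f [0..<j])) = n * j"
proof -
  have "[0..<T] = [0..<j] @ [j..<T]" using assms(2) upt_add_eq_append[of 0 j "T-j"] by simp
  also have "[j..<T] = [j] @ [Suc j..<T]" using assms(2) upt_conv_Cons by simp
  finally have "[0..<T] = [0..<j] @ [j] @ [Suc j..<T]" .
  then show "concat (map f [0..<T]) = concat (map f [0..<j]) @ f j @ concat (map f [Suc j..<T])"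
    by simp
  have "length (concat (map f [0..<j])) = (\<Sum>i\<leftarrow>[0..<j]. n)"
    unfolding length_concat map_map o_def using assms by (intro arg_cong[where f=sum_list] map_cong) auto
  then show "length (concat (map f [0..<j])) = n * j" by (simp add: sum_list_triv)
qed

lemma length_concat_blk: assumes "\<forall>j<T. length (f j) = n"
  shows "length (concat (map f [0..<T])) = n * T"
proof -
  have "length (concat (map f [0..<T])) = (\<Sum>i\<leftarrow>[0..<T]. n)"
    unfolding length_concat map_map o_def using assms by (intro arg_cong[where f=sum_list] map_cong) auto
  then show ?thesis by (simp add: sum_list_triv)
qed

lemma take_drop_blk: assumes "\<forall>j<T. length (f j) = n" "j < T"
  shows "take n (drop (n * j) (concat (map f [0..<T]))) = f j"
  using concat_blk[OF assms] assms by simp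

lemma nth_blk: assumes "\<forall>j<T. length (f j) = n" "j < T" "i < n"
  shows "concat (map f [0..<T]) ! (n * j + i) = f j ! i"
  using concat_blk[OF assms(1,2)] assms by (simp add: nth_append)

lemma fetch_append: "i < length xs \<Longrightarrow> fetch (xs @ ys) i = xs ! i"
  by (simp add: fetch_def nth_append)

lemma map_fetch: "a + n \<le> length st \<Longrightarrow> map (fetch st) [a..<a+n] = take n (drop a st)"
  by (intro nth_equalityI) (auto simp: fetch_def)

lemma blockU_dims[simp]: "dim_row (blockU m s B u) = m * s" "dim_col (blockU m s B u) = dim_col u"
  by (simp_all add: blockU_def)

lemma blockV_dims[simp]: "dim_row (blockV m s B v) = dim_row v" "dim_col (blockV m s B v) = m * s"
  by (simp_all add: blockV_def)

lemma Uw_blocks: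
  assumes B: "B \<in> carrier_mat n n" and u: "u \<in> carrier_mat s n" and w: "length w = n"
  shows "concat (map (\<lambda>j. mvp p (u * B ^\<^sub>m j) w) [0..<m]) = mvp p (blockU m s B u) w"
proof -
  have len: "\<forall>j<m. length (mvp p (u * B ^\<^sub>m j) w) = s" using u by simp
  show ?thesis
  proof (rule nth_equalityI)
    show "length (concat (map (\<lambda>j. mvp p (u * B ^\<^sub>m j) w) [0..<m])) = length (mvp p (blockU m s B u) w)"
      using length_concat_blk[OF len] by simp
    fix i assume "i < length (concat (map (\<lambda>j. mvp p (u * B ^\<^sub>m j) w) [0..<m]))"
    then have i: "i < m * s" using length_concat_blk[OF len] by (simp add: mult.commute)
    then have s0: "s > 0" by (cases s) auto
    define j r where "j = i div s" and "r = i mod s"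
    have ij: "i = s * j + r" and r: "r < s" and j: "j < m" using i s0
      by (auto simp: j_def r_def less_mult_imp_div_less mult.commute)
    have "concat (map (\<lambda>j. mvp p (u * B ^\<^sub>m j) w) [0..<m]) ! i = mvp p (u * B ^\<^sub>m j) w ! r"
      unfolding ij by (rule nth_blk[OF len j r])
    also have "\<dots> = (row (u * B ^\<^sub>m j) r \<bullet> vec_of_list w) mod p"
      using u r by (simp add: mvp_nth)
    also have "row (u * B ^\<^sub>m j) r = row (blockU m s B u) i"
    proof (rule eq_vecI)
      show "dim_vec (row (u * B ^\<^sub>m j) r) = dim_vec (row (blockU m s B u) i)"
        using u B by auto
      fix c assume "c < dim_vec (row (blockU m s B u) i)"
      then have c: "c < n" using u by auto
      show "row (u * B ^\<^sub>m j) r $ c = row (blockU m s B u) i $ c"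
        using c u B i r unfolding blockU_def j_def r_def by auto
    qed
    also have "(row (blockU m s B u) i \<bullet> vec_of_list w) mod p = mvp p (blockU m s B u) w ! i"
      using i by (simp add: mvp_nth)
    finally show "concat (map (\<lambda>j. mvp p (u * B ^\<^sub>m j) w) [0..<m]) ! i = mvp p (blockU m s B u) w ! i" .
  qed
qed

lemma blockV_entry_shift:
  assumes B: "B \<in> carrier_mat n n" and v: "v \<in> carrier_mat n s" and i: "i < n" and c: "c < k * s"
  shows "blockV (Suc k) s B v $$ (i, c + s) = (B * blockV k s B v) $$ (i, c)"
proof -
  have s0: "s > 0" using c by (cases s) auto
  define q r where "q = c div s" and "r = c mod s"
  have r: "r < s" using s0 by (simp add: r_def)
  have cs: "(c + s) div s = Suc q" "(c + s) mod s = r" using s0 by (simp_all add: q_def r_def)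
  have "blockV (Suc k) s B v $$ (i, c + s) = (B ^\<^sub>m Suc q * v) $$ (i, r)"
    using i c v cs by (simp add: blockV_def)
  also have "B ^\<^sub>m Suc q * v = B * (B ^\<^sub>m q * v)"
    using pow_comm[OF B, of q] B v by (metis assoc_mult_mat pow_carrier_mat)
  also have "(B * (B ^\<^sub>m q * v)) $$ (i, r) = row B i \<bullet> col (B ^\<^sub>m q * v) r"
    using B v i r by simp
  also have "col (B ^\<^sub>m q * v) r = col (blockV k s B v) c"
  proof (rule eq_vecI)
    show "dim_vec (col (B ^\<^sub>m q * v) r) = dim_vec (col (blockV k s B v) c)"
      using B v by simp
    fix l assume "l < dim_vec (col (blockV k s B v) c)"
    then have l: "l < n" using v by simp
    show "col (B ^\<^sub>m q * v) r $ l = col (blockV k s B v) c $ l"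
      using l c r B v by (simp add: blockV_def q_def r_def)
  qed
  also have "row B i \<bullet> col (blockV k s B v) c = (B * blockV k s B v) $$ (i, c)"
    using B v i c by simp
  finally show ?thesis .
qed

lemma blockV_rec:
  assumes B: "B \<in> carrier_mat n n" and v: "v \<in> carrier_mat n s" and z: "length z = Suc k * s"
  shows "blockV (Suc k) s B v *\<^sub>v vec_of_list z =
    v *\<^sub>v vec_of_list (take s z) + (B * blockV k s B v) *\<^sub>v vec_of_list (drop s z)"
proof (rule eq_vecI)
  show "dim_vec (blockV (Suc k) s B v *\<^sub>v vec_of_list z) =
    dim_vec (v *\<^sub>v vec_of_list (take s z) + (B * blockV k s B v) *\<^sub>v vec_of_list (drop s z))"
    using v B by simp
  fix i assume "i < dim_vec (v *\<^sub>v vec_of_list (take s z) + (B * blockV k s B v) *\<^sub>v vec_of_list (drop s z))"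
  then have i: "i < n" using v B by simp
  let ?V = "blockV (Suc k) s B v"
  have "(?V *\<^sub>v vec_of_list z) $ i = (\<Sum>c\<in>{0..<s + k * s}. ?V $$ (i, c) * z ! c)"
    using i v z by (simp add: scalar_prod_def vec_of_list_index)
  also have "\<dots> = (\<Sum>c\<in>{0..<s}. ?V $$ (i, c) * z ! c) + (\<Sum>c\<in>{s..<s + k * s}. ?V $$ (i, c) * z ! c)"
    by (rule sum.atLeastLessThan_concat[symmetric]) auto
  also have "(\<Sum>c\<in>{0..<s}. ?V $$ (i, c) * z ! c) = (\<Sum>c\<in>{0..<s}. v $$ (i, c) * take s z ! c)"
    using i v B by (intro sum.cong) (auto simp: blockV_def)
  also have "\<dots> = (v *\<^sub>v vec_of_list (take s z)) $ i"
    using i v z by (simp add: scalar_prod_def vec_of_list_index)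
  also have "(\<Sum>c\<in>{s..<s + k * s}. ?V $$ (i, c) * z ! c) = (\<Sum>c\<in>{0..<k * s}. ?V $$ (i, c + s) * z ! (c + s))"
    using sum.shift_bounds_nat_ivl[of "\<lambda>c. ?V $$ (i, c) * z ! c" 0 s "k * s"] by (simp add: add.commute)
  also have "\<dots> = (\<Sum>c\<in>{0..<k * s}. (B * blockV k s B v) $$ (i, c) * drop s z ! c)"
    using i z by (intro sum.cong) (auto simp: blockV_entry_shift[OF B v] add.commute)
  also have "\<dots> = ((B * blockV k s B v) *\<^sub>v vec_of_list (drop s z)) $ i"
    using i v z B by (simp add: scalar_prod_def vec_of_list_index)
  finally show "(?V *\<^sub>v vec_of_list z) $ i = (v *\<^sub>v vec_of_list (take s z) + (B * blockV k s B v) *\<^sub>v vec_of_list (drop s z)) $ i"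
    using i v z B by simp
qed

lemma cancel_U:
  assumes p: "prime p" and U: "U \<in> carrier_mat n n" and d: "det U mod p \<noteq> 0"
    and x: "length x = n" "in_range p x" and y: "length y = n" "in_range p y"
    and e: "mvp p U x = mvp p U y"
  shows "x = y"
proof (rule nth_equalityI)
  show "length x = length y" using x y by simp
  fix i assume "i < length x"
  then have i: "i < n" using x by simp
  have A: "adj_mat U \<in> carrier_mat n n" "adj_mat U * U = det U \<cdot>\<^sub>m 1\<^sub>m n" using adj_mat[OF U] by auto
  have "mvp p (det U \<cdot>\<^sub>m 1\<^sub>m n) x = mvp p (det U \<cdot>\<^sub>m 1\<^sub>m n) y"
    using mvp_mvp[OF A(1) U x(1), of p] mvp_mvp[OF A(1) U y(1), of p] e A(2) by simp
  then have "mvp p (det U \<cdot>\<^sub>m 1\<^sub>m n) x ! i = mvp p (det U \<cdot>\<^sub>m 1\<^sub>m n) y ! i" by simp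
  then have "(det U * x ! i) mod p = (det U * y ! i) mod p"
  proof -
    have cx: "vec_of_list x \<in> carrier_vec n" "vec_of_list y \<in> carrier_vec n"
      using x y by (auto intro: carrier_vecI)
    show ?thesis using \<open>mvp p _ x ! i = _\<close> i x y
      by (simp add: mvp_nth scalar_prod_left_unit[OF cx(1) i] scalar_prod_left_unit[OF cx(2) i] vec_of_list_index)
  qed
  then have "p dvd det U * (x ! i - y ! i)"
    by (simp add: mod_eq_dvd_iff right_diff_distrib)
  moreover have "\<not> p dvd det U" using d by (simp add: dvd_eq_mod_eq_0)
  ultimately have "p dvd (x ! i - y ! i)" using p by (simp add: prime_dvd_mult_iff)
  then have "x ! i mod p = y ! i mod p" by (simp add: mod_eq_dvd_iff)
  moreover have "x ! i mod p = x ! i" "y ! i mod p = y ! i"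
    using x y i by (auto simp: in_range_def intro!: mod_pos_pos_trivial)
  ultimately show "x ! i = y ! i" by simp
qed

definition addl :: "int \<Rightarrow> nat \<Rightarrow> int list \<Rightarrow> int list \<Rightarrow> int list" where
  "addl p n X Y = map (\<lambda>i. (X ! i + Y ! i) mod p) [0..<n]"

lemma blockV_one: assumes B: "B \<in> carrier_mat n n" and v: "v \<in> carrier_mat n s"
  shows "blockV 1 s B v = v"
  using B v by (intro eq_matI) (auto simp: blockV_def)

lemma horner_step:
  assumes B: "B \<in> carrier_mat n n" and v: "v \<in> carrier_mat n s" and z: "length z = Suc k * s"
  shows "mvp p (blockV (Suc k) s B v) z =
    addl p n (mvp p B (mvp p (blockV k s B v) (drop s z))) (mvp p v (take s z))"
proof (rule nth_equalityI)
  show "length (mvp p (blockV (Suc k) s B v) z) =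
    length (addl p n (mvp p B (mvp p (blockV k s B v) (drop s z))) (mvp p v (take s z)))"
    using v by (simp add: addl_def)
  fix i assume "i < length (mvp p (blockV (Suc k) s B v) z)"
  then have i: "i < n" using v by simp
  have Vk: "blockV k s B v \<in> carrier_mat n (k * s)" using v by (auto intro: carrier_matI)
  have dz: "length (drop s z) = k * s" using z by simp
  have ts: "s \<le> length z" using z by simp
  have e1: "mvp p B (mvp p (blockV k s B v) (drop s z)) = mvp p (B * blockV k s B v) (drop s z)"
    by (rule mvp_mvp[OF B Vk dz])
  have "mvp p (blockV (Suc k) s B v) z ! i = ((blockV (Suc k) s B v *\<^sub>v vec_of_list z) $ i) mod p"
    using i v by (simp add: mvp_def list_of_vec_index)
  also have "\<dots> = ((v *\<^sub>v vec_of_list (take s z)) $ i + ((B * blockV k s B v) *\<^sub>v vec_of_list (drop s z)) $ i) mod p"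
    using blockV_rec[OF B v z] i v B by simp
  also have "\<dots> = (mvp p (B * blockV k s B v) (drop s z) ! i + mvp p v (take s z) ! i) mod p"
    using i v B by (simp add: mvp_def list_of_vec_index mod_add_eq add.commute)
  also have "\<dots> = addl p n (mvp p B (mvp p (blockV k s B v) (drop s z))) (mvp p v (take s z)) ! i"
    using i e1 by (simp add: addl_def)
  finally show "mvp p (blockV (Suc k) s B v) z ! i = addl p n (mvp p B (mvp p (blockV k s B v) (drop s z))) (mvp p v (take s z)) ! i" .
qed

lemma in_range_take_drop: "in_range p z \<Longrightarrow> in_range p (take a (drop b z))"
  unfolding in_range_def by (meson in_set_dropD in_set_takeD)

definition exe :: "int \<Rightarrow> bbox \<Rightarrow> bbox \<Rightarrow> bbox \<Rightarrow> bbox \<Rightarrow> instr list \<Rightarrow> int list \<Rightarrow> int list" where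
  "exe p oB oU oV oH ins st = fold (\<lambda>i st. step p oB oU oV oH st i) ins st"

lemma exe_append: "exe p oB oU oV oH (xs @ ys) st = exe p oB oU oV oH ys (exe p oB oU oV oH xs st)"
  by (simp add: exe_def)

lemma exe_Cons: "exe p oB oU oV oH (x # ys) st = exe p oB oU oV oH ys (step p oB oU oV oH st x)"
  by (simp add: exe_def)

lemma exe_Nil: "exe p oB oU oV oH [] st = st"
  by (simp add: exe_def)

lemma run_exe: "run p oB oU oV oH P w = map (fetch (exe p oB oU oV oH (fst P) w)) (snd P)"
  by (simp add: run_def exe_def Let_def)

lemma phaseB:
  assumes len: "\<forall>j<Suc T. length (W j) = n" and rec: "\<forall>j<T. W (Suc j) = oB (W j)"
  shows "exe p oB oU oV oH (map (\<lambda>j. CallB [n*j..<n*j+n]) [0..<T]) (W 0) = concat (map W [0..<Suc T])"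
  using len rec
proof (induction T)
  case 0 then show ?case by (simp add: exe_Nil)
next
  case (Suc T)
  let ?st = "concat (map W [0..<Suc T])"
  have IH: "exe p oB oU oV oH (map (\<lambda>j. CallB [n*j..<n*j+n]) [0..<T]) (W 0) = ?st"
    using Suc by auto
  have l1: "\<forall>j<Suc T. length (W j) = n" using Suc.prems by auto
  have "length ?st = n * Suc T" by (rule length_concat_blk[OF l1])
  then have "map (fetch ?st) [n*T..<n*T+n] = take n (drop (n*T) ?st)"
    by (intro map_fetch) simp
  also have "\<dots> = W T" by (rule take_drop_blk[OF l1]) simp
  finally have f: "map (fetch ?st) [n*T..<n*T+n] = W T" .
  show ?case using IH f Suc.prems(2)
    by (simp add: exe_append exe_Cons exe_Nil)
qed

lemma phase_pref:
  assumes "\<forall>j<T. \<forall>ys. step p oB oU oV oH (S0 @ ys) (g j) = S0 @ ys @ h j"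
  shows "exe p oB oU oV oH (map g [0..<T]) S0 = S0 @ concat (map h [0..<T])"
  using assms
proof (induction T)
  case 0 then show ?case by (simp add: exe_Nil)
next
  case (Suc T)
  then have IH: "exe p oB oU oV oH (map g [0..<T]) S0 = S0 @ concat (map h [0..<T])" by auto
  show ?case using IH Suc.prems[rule_format, of T "concat (map h [0..<T])"]
    by (simp add: exe_append exe_Cons exe_Nil)
qed

lemma map_fetch_pref: "a + k \<le> length S0 \<Longrightarrow> map (fetch (S0 @ ys)) [a..<a+k] = take k (drop a S0)"
  by (subst map_fetch) auto

lemma phase_add:
  assumes "length S0 = a + 2 * n" "take n (drop a S0) = X" "take n (drop (a + n) S0) = Y"
  shows "exe p oB oU oV oH (map (\<lambda>i. Add (a+i) (a+n+i)) [0..<n]) S0 = S0 @ addl p n X Y"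
proof -
  have "exe p oB oU oV oH (map (\<lambda>i. Add (a+i) (a+n+i)) [0..<n]) S0 = S0 @ concat (map (\<lambda>i. [(X ! i + Y ! i) mod p]) [0..<n])"
  proof (rule phase_pref, intro allI impI)
    fix j ys assume j: "j < n"
    have "fetch (S0 @ ys) (a + j) = X ! j" unfolding assms(2)[symmetric] using assms(1) j
      by (simp add: fetch_append)
    moreover have "fetch (S0 @ ys) (a + n + j) = Y ! j" unfolding assms(3)[symmetric] using assms(1) j
      by (simp add: fetch_append)
    ultimately show "step p oB oU oV oH (S0 @ ys) (Add (a + j) (a + n + j)) = S0 @ ys @ [(X ! j + Y ! j) mod p]"
      by simp
  qed
  also have "concat (map (\<lambda>i. [(X ! i + Y ! i) mod p]) [0..<n]) = addl p n X Y"
    by (simp add: addl_def concat_map_singleton)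
  finally show ?thesis .
qed

definition hit :: "nat \<Rightarrow> nat \<Rightarrow> nat \<Rightarrow> nat \<Rightarrow> nat \<Rightarrow> instr list" where
  "hit n s zb a j = [CallB [a..<a+n], CallV [zb+s*j..<zb+s*j+s]] @ map (\<lambda>i. Add (a+n+i) (a+n+n+i)) [0..<n]"

primrec hacc :: "int \<Rightarrow> nat \<Rightarrow> bbox \<Rightarrow> bbox \<Rightarrow> (nat \<Rightarrow> int list) \<Rightarrow> nat \<Rightarrow> int list" where
  "hacc p n oB oV g 0 = oV (g 0)"
| "hacc p n oB oV g (Suc t) = addl p n (oB (hacc p n oB oV g t)) (oV (g (Suc t)))"

lemma phase_horner:
  assumes S2: "length S2 = a0" and zb: "zb + s * m \<le> a0" and T: "T \<le> m - 1"
    and accl: "\<forall>t\<le>T. length (hacc p n oB oV g t) = n"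
    and oBl: "\<forall>t<T. length (oB (hacc p n oB oV g t)) = n"
    and oVl: "\<forall>t<T. length (oV (g (Suc t))) = n"
    and gdef: "\<forall>t<T. take s (drop (zb + s * (m - 1 - Suc t)) S2) = g (Suc t)"
  shows "\<exists>mid. exe p oB oU oV oH (concat (map (\<lambda>t. hit n s zb (a0 + 3*n*t) (m - 1 - Suc t)) [0..<T]))
      (S2 @ hacc p n oB oV g 0) = S2 @ mid @ hacc p n oB oV g T \<and> length mid = 3 * n * T"
  using T accl oBl oVl gdef
proof (induction T)
  case 0 then show ?case by (simp add: exe_Nil)
next
  case (Suc T)
  then obtain mid where mid: "exe p oB oU oV oH (concat (map (\<lambda>t. hit n s zb (a0 + 3*n*t) (m - 1 - Suc t)) [0..<T]))
      (S2 @ hacc p n oB oV g 0) = S2 @ mid @ hacc p n oB oV g T" "length mid = 3 * n * T"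
    by auto
  let ?a = "a0 + 3*n*T"
  let ?A = "hacc p n oB oV g T"
  let ?j = "m - 1 - Suc T"
  let ?st = "S2 @ mid @ ?A"
  have lA: "length ?A = n" using Suc.prems by auto
  have lst: "length ?st = ?a + n" using mid(2) lA S2 by simp
  have lB: "length (oB ?A) = n" using Suc.prems by auto
  have lV: "length (oV (g (Suc T))) = n" using Suc.prems by auto
  have f1: "map (fetch ?st) [?a..<?a+n] = ?A"
    using lst lA by (subst map_fetch) auto
  let ?st1 = "?st @ oB ?A"
  have jj: "zb + s * ?j + s \<le> length S2"
  proof -
    have "s * ?j + s \<le> s * m" using Suc.prems(1)
      by (metis Suc_diff_Suc Suc_leI add.commute diff_less le_refl less_le_trans mult_Suc_right mult_le_mono2 zero_less_Suc diff_le_self)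
    then show ?thesis using zb S2 by linarith
  qed
  have f2: "map (fetch ?st1) [zb + s * ?j..<zb + s * ?j + s] = g (Suc T)"
  proof -
    have "?st1 = S2 @ (mid @ ?A @ oB ?A)" by simp
    then have "map (fetch ?st1) [zb + s * ?j..<zb + s * ?j + s] = take s (drop (zb + s * ?j) S2)"
      using jj by (simp only: map_fetch_pref)
    then show ?thesis using Suc.prems(5) by auto
  qed
  let ?st2 = "?st1 @ oV (g (Suc T))"
  have "exe p oB oU oV oH (hit n s zb ?a ?j) ?st = exe p oB oU oV oH (map (\<lambda>i. Add (?a+n+i) (?a+n+n+i)) [0..<n]) ?st2"
    unfolding hit_def using f1 f2 by (simp add: exe_append exe_Cons exe_Nil)
  also have "\<dots> = ?st2 @ addl p n (oB ?A) (oV (g (Suc T)))"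
    by (rule phase_add) (use lst lB lV in simp_all)
  finally have step: "exe p oB oU oV oH (hit n s zb ?a ?j) ?st = S2 @ (mid @ ?A @ oB ?A @ oV (g (Suc T))) @ hacc p n oB oV g (Suc T)"
    by simp
  show ?case
    by (rule exI[of _ "mid @ ?A @ oB ?A @ oV (g (Suc T))"])
       (use step mid lA lB lV in \<open>simp add: exe_append\<close>)
qed

definition progB :: "nat \<Rightarrow> nat \<Rightarrow> prog" where
  "progB m s = (let n = m * s; zb = n * m + n; a0 = n * m + 2 * n in
    (map (\<lambda>j. CallB [n*j..<n*j+n]) [0..<m-1] @ map (\<lambda>j. CallU [n*j..<n*j+n]) [0..<m]
     @ [CallH [n*m..<n*m+n], CallV [zb + s*(m-1)..<zb + s*(m-1)+s]]
     @ concat (map (\<lambda>t. hit n s zb (a0 + 3*n*t) (m - 1 - Suc t)) [0..<m-1]),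
     [a0 + 3*n*(m-1)..<a0 + 3*n*(m-1)+n]))"

context
  fixes p :: int and m s n :: nat and B u v :: "int mat" and oB oU oV oH :: bbox and w :: "int list"
  assumes p: "prime p" and m: "0 < m" and s: "0 < s" and n: "n = m * s"
    and B: "B \<in> carrier_mat n n" and u: "u \<in> carrier_mat s n" and v: "v \<in> carrier_mat n s"
    and U: "nonsingular_modp p (blockU m s B u)"
    and oB: "\<forall>w. length w = n \<and> in_range p w \<longrightarrow> oB w = mvp p B w"
    and oU: "\<forall>w. length w = n \<and> in_range p w \<longrightarrow> oU w = mvp p u w"
    and oV: "\<forall>x. length x = s \<and> in_range p x \<longrightarrow> oV x = mvp p v x"
    and oH: "\<forall>y. length y = n \<and> in_range p y \<longrightarrow>
          length (oH y) = n \<and> in_range p (oH y) \<and> mvp p (blockU m s B u * B * blockV m s B v) (oH y) = y"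
    and w: "length w = n" "in_range p w"
begin

lemma p0: "p > 0" using p by (simp add: prime_gt_0_int)

definition "W j = (oB ^^ j) w"

lemma W_char: "W j = mvp p (B ^\<^sub>m j) w"
proof (induction j)
  case 0
  have "B ^\<^sub>m 0 = 1\<^sub>m (length w)" using B w by simp
  then show ?case using mvp_one[OF w(2)] by (simp add: W_def)
next
  case (Suc j)
  have l: "length (W j) = n" "in_range p (W j)" using Suc B by (auto simp: in_range_mvp p0)
  have "W (Suc j) = oB (W j)" by (simp add: W_def)
  also have "\<dots> = mvp p B (W j)" using oB l by auto
  also have "\<dots> = mvp p (B * B ^\<^sub>m j) w" unfolding Suc
    by (rule mvp_mvp[OF B]) (use B w in auto)
  also have "B * B ^\<^sub>m j = B ^\<^sub>m Suc j" by (rule pow_comm[OF B])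
  finally show ?case .
qed

lemma W_ok: "length (W j) = n" "in_range p (W j)"
  using B by (auto simp: W_char in_range_mvp p0)

lemma oU_W: "oU (W j) = mvp p (u * B ^\<^sub>m j) w"
proof -
  have "oU (W j) = mvp p u (W j)" using oU W_ok by auto
  also have "\<dots> = mvp p (u * B ^\<^sub>m j) w" unfolding W_char
    by (rule mvp_mvp[OF u]) (use B w in auto)
  finally show ?thesis .
qed

definition "S0 = concat (map W [0..<m])"
definition "Uw = concat (map (\<lambda>j. oU (W j)) [0..<m])"

lemma Uw_eq: "Uw = mvp p (blockU m s B u) w"
  unfolding Uw_def oU_W by (rule Uw_blocks[OF B u w(1)])

lemma Uw_ok: "length Uw = n" "in_range p Uw"
  using n by (auto simp: Uw_eq in_range_mvp p0)

lemma S0_len: "length S0 = n * m"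
  unfolding S0_def by (rule length_concat_blk) (simp add: W_ok)

lemma exe1: "exe p oB oU oV oH (map (\<lambda>j. CallB [n*j..<n*j+n]) [0..<m-1]) w = S0"
proof -
  have "exe p oB oU oV oH (map (\<lambda>j. CallB [n*j..<n*j+n]) [0..<m-1]) (W 0) = concat (map W [0..<Suc (m-1)])"
  proof (rule phaseB)
    show "\<forall>j<Suc (m-1). length (W j) = n" by (simp add: W_ok)
    show "\<forall>j<m-1. W (Suc j) = oB (W j)" by (simp add: W_def)
  qed
  then show ?thesis using m by (simp add: S0_def W_def)
qed

lemma exe2: "exe p oB oU oV oH (map (\<lambda>j. CallU [n*j..<n*j+n]) [0..<m]) S0 = S0 @ Uw"
  unfolding Uw_def
proof (rule phase_pref, intro allI impI)
  fix j ys assume j: "j < m"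
  have "Suc j \<le> m" using j by simp
  then have "n * Suc j \<le> n * m" by (rule mult_le_mono2)
  then have le: "n * j + n \<le> length S0" using S0_len by simp
  have "map (fetch (S0 @ ys)) [n*j..<n*j+n] = take n (drop (n*j) S0)"
    by (rule map_fetch_pref[OF le])
  also have "\<dots> = W j" unfolding S0_def by (rule take_drop_blk) (use j W_ok in auto)
  finally show "step p oB oU oV oH (S0 @ ys) (CallU [n * j..<n * j + n]) = S0 @ ys @ oU (W j)"
    by simp
qed

definition "z = oH Uw"

lemma z_ok: "length z = n" "in_range p z" "mvp p (blockU m s B u * B * blockV m s B v) z = Uw"
  using oH Uw_ok by (auto simp: z_def)

definition "S2 = S0 @ Uw @ z"

lemma S2_len: "length S2 = n * m + 2 * n"
  using S0_len Uw_ok z_ok by (simp add: S2_def)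

definition "g t = take s (drop (s * (m - 1 - t)) z)"

lemma g_ok: "length (g t) = s" "in_range p (g t)"
proof -
  have "Suc (m - 1 - t) \<le> m" using m by simp
  then have "s * Suc (m - 1 - t) \<le> s * m" by (rule mult_le_mono2)
  then have "s * (m - 1 - t) + s \<le> n" using n by (simp add: mult.commute)
  then show "length (g t) = s" using z_ok by (simp add: g_def)
  show "in_range p (g t)" unfolding g_def by (rule in_range_take_drop[OF z_ok(2)])
qed

lemma acc_char: "t < m \<Longrightarrow> hacc p n oB oV g t = mvp p (blockV (Suc t) s B v) (drop (s * (m - 1 - t)) z)"
proof (induction t)
  case 0
  have "hacc p n oB oV g 0 = mvp p v (g 0)" using oV g_ok by simp
  also have "g 0 = drop (s * (m - 1)) z"
  proof -
    obtain k where k: "m = Suc k" using m by (cases m) auto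
    have "length (drop (s * (m - 1)) z) = s" using z_ok n k by simp
    then show ?thesis by (simp add: g_def)
  qed
  finally show ?case using blockV_one[OF B v] by simp
next
  case (Suc t)
  let ?z' = "drop (s * (m - 1 - Suc t)) z"
  obtain k where k: "m = Suc (Suc t + k)" using less_imp_Suc_add[OF Suc.prems] by blast
  have lz: "length ?z' = Suc (Suc t) * s" using z_ok n k
    by (simp add: algebra_simps)
  have A: "hacc p n oB oV g t = mvp p (blockV (Suc t) s B v) (drop s ?z')"
  proof -
    have "s + s * (m - 1 - Suc t) = s * (m - 1 - t)" using k by simp
    then show ?thesis using Suc by (simp add: add.commute)
  qed
  have Aok: "length (hacc p n oB oV g t) = n" "in_range p (hacc p n oB oV g t)"
    using A v by (auto simp: in_range_mvp p0)
  have "hacc p n oB oV g (Suc t) = addl p n (mvp p B (hacc p n oB oV g t)) (mvp p v (g (Suc t)))"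
    using oB oV Aok g_ok by simp
  also have "g (Suc t) = take s ?z'" by (simp add: g_def)
  also have "addl p n (mvp p B (hacc p n oB oV g t)) (mvp p v (take s ?z')) = mvp p (blockV (Suc (Suc t)) s B v) ?z'"
    unfolding A by (rule horner_step[OF B v lz, symmetric])
  finally show ?case .
qed

lemma acc_ok: "t < m \<Longrightarrow> length (hacc p n oB oV g t) = n \<and> in_range p (hacc p n oB oV g t)"
  using acc_char v by (auto simp: in_range_mvp p0)

lemma final_store:
  "\<exists>mid. exe p oB oU oV oH (fst (progB m s)) w = S2 @ mid @ hacc p n oB oV g (m - 1) \<and> length mid = 3 * n * (m - 1)"
proof -
  define zb where "zb = n * m + n"
  define a0 where "a0 = n * m + 2 * n"
  have fst: "fst (progB m s) = map (\<lambda>j. CallB [n*j..<n*j+n]) [0..<m-1] @ map (\<lambda>j. CallU [n*j..<n*j+n]) [0..<m]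
     @ [CallH [n*m..<n*m+n], CallV [zb + s*(m-1)..<zb + s*(m-1)+s]]
     @ concat (map (\<lambda>t. hit n s zb (a0 + 3*n*t) (m - 1 - Suc t)) [0..<m-1])"
    unfolding progB_def Let_def n[symmetric] zb_def a0_def by simp
  have lS0U: "length (S0 @ Uw) = n * m + n" using S0_len Uw_ok by simp
  have c1: "map (fetch (S0 @ Uw)) [n*m..<n*m+n] = Uw"
    using lS0U S0_len Uw_ok by (subst map_fetch) auto
  have st1: "step p oB oU oV oH (S0 @ Uw) (CallH [n*m..<n*m+n]) = S2"
    using c1 by (simp add: S2_def z_def)
  have zz: "zb + s * m \<le> length S2" using S2_len n by (simp add: zb_def mult.commute)
  have gS2: "take s (drop (zb + s * (m - 1 - t)) S2) = g t" for t
    unfolding S2_def g_def zb_def using S0_len Uw_ok by (simp add: drop_append)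
  have le1: "zb + s * (m - 1) + s \<le> length S2"
  proof -
    have "s * (m - 1) + s = s * m" using m by (cases m) auto
    then show ?thesis using zz by simp
  qed
  have c2: "map (fetch S2) [zb + s*(m-1)..<zb + s*(m-1)+s] = g 0"
    using le1 gS2[of 0] by (subst map_fetch) auto
  have st2: "step p oB oU oV oH S2 (CallV [zb + s*(m-1)..<zb + s*(m-1)+s]) = S2 @ hacc p n oB oV g 0"
    using c2 by simp
  have H: "\<exists>mid. exe p oB oU oV oH (concat (map (\<lambda>t. hit n s zb (a0 + 3*n*t) (m - 1 - Suc t)) [0..<m-1]))
      (S2 @ hacc p n oB oV g 0) = S2 @ mid @ hacc p n oB oV g (m-1) \<and> length mid = 3 * n * (m-1)"
  proof (rule phase_horner)
    show "length S2 = a0" using S2_len by (simp add: a0_def)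
    show "zb + s * m \<le> a0" using n by (simp add: zb_def a0_def mult.commute)
    show "m - 1 \<le> m - 1" by simp
    show "\<forall>t\<le>m - 1. length (hacc p n oB oV g t) = n" using acc_ok m by auto
    show "\<forall>t<m - 1. length (oB (hacc p n oB oV g t)) = n"
    proof (intro allI impI)
      fix t assume "t < m - 1"
      then have "length (hacc p n oB oV g t) = n \<and> in_range p (hacc p n oB oV g t)" using acc_ok by simp
      then show "length (oB (hacc p n oB oV g t)) = n" using oB B by simp
    qed
    show "\<forall>t<m - 1. length (oV (g (Suc t))) = n" using oV g_ok v by simp
    show "\<forall>t<m - 1. take s (drop (zb + s * (m - 1 - Suc t)) S2) = g (Suc t)" using gS2 by simp
  qed
  show ?thesis using H st1 st2 exe1 exe2
    unfolding fst by (simp add: exe_append exe_Cons exe_Nil)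
qed

lemma prog_correct:
  "length (run p oB oU oV oH (progB m s) w) = n \<and> in_range p (run p oB oU oV oH (progB m s) w)
    \<and> mvp p B (run p oB oU oV oH (progB m s) w) = w"
proof -
  obtain mid where mid: "exe p oB oU oV oH (fst (progB m s)) w = S2 @ mid @ hacc p n oB oV g (m - 1)"
      "length mid = 3 * n * (m - 1)"
    using final_store by blast
  define a0 where "a0 = n * m + 2 * n"
  have snd: "snd (progB m s) = [a0 + 3*n*(m-1)..<a0 + 3*n*(m-1)+n]"
    unfolding progB_def Let_def n[symmetric] a0_def by simp
  define V where "V = blockV m s B v"
  define UU where "UU = blockU m s B u"
  have acc: "hacc p n oB oV g (m - 1) = mvp p V z"
    using acc_char[of "m-1"] m by (simp add: V_def)
  have lacc: "length (hacc p n oB oV g (m - 1)) = n" using acc v by (simp add: V_def)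
  have x: "run p oB oU oV oH (progB m s) w = mvp p V z"
  proof -
    have "run p oB oU oV oH (progB m s) w = map (fetch (S2 @ mid @ hacc p n oB oV g (m - 1))) [a0 + 3*n*(m-1)..<a0 + 3*n*(m-1)+n]"
      unfolding run_exe mid snd ..
    also have "\<dots> = hacc p n oB oV g (m - 1)"
      using S2_len mid(2) lacc by (subst map_fetch) (auto simp: a0_def)
    finally show ?thesis using acc by simp
  qed
  have Vc: "V \<in> carrier_mat n n" using v n by (auto simp: V_def intro!: carrier_matI)
  have Uc: "UU \<in> carrier_mat n n" using u n by (auto simp: UU_def intro!: carrier_matI)
  have BV: "B * V \<in> carrier_mat n n" using B Vc by simp
  have y: "mvp p B (mvp p V z) = mvp p (B * V) z" by (rule mvp_mvp[OF B Vc z_ok(1)])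
  have "mvp p UU (mvp p (B * V) z) = mvp p (UU * (B * V)) z" by (rule mvp_mvp[OF Uc BV z_ok(1)])
  also have "UU * (B * V) = UU * B * V" using Uc B Vc by (simp add: assoc_mult_mat)
  also have "mvp p (UU * B * V) z = mvp p UU w" using z_ok(3) Uw_eq by (simp add: UU_def V_def)
  finally have e: "mvp p UU (mvp p (B * V) z) = mvp p UU w" .
  have d: "det UU mod p \<noteq> 0" using U by (simp add: UU_def nonsingular_modp_def)
  have "mvp p (B * V) z = w"
    by (rule cancel_U[OF p Uc d _ _ w e]) (use BV in \<open>auto simp: in_range_mvp p0\<close>)
  then show ?thesis unfolding x using y v by (auto simp: V_def in_range_mvp p0)
qed

end

lemma sum_list_const: "(\<And>x. x \<in> set xs \<Longrightarrow> f x = c) \<Longrightarrow> sum_list (map f xs) = real (length xs) * c"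
  by (induction xs) (auto simp: algebra_simps)

lemma cost_hit: "sum_list (map (icost mu cU cV cH) (hit n s zb a j)) = mu + cV + real n"
proof -
  have "sum_list (map (icost mu cU cV cH) (map (\<lambda>i. Add (a+n+i) (a+n+n+i)) [0..<n])) = real n"
    unfolding map_map by (subst sum_list_const[where c=1]) auto
  then show ?thesis by (simp add: hit_def)
qed

lemma cost_progB: assumes "0 < m"
  shows "cost mu cU cV cH (progB m s) =
    2 * real (m - 1) * mu + real m * cU + real m * cV + cH + real (m - 1) * real (m * s)"
proof -
  have h: "sum_list (map (icost mu cU cV cH) (concat (map (\<lambda>t. hit n s zb (a0 + 3*n*t) (m - 1 - Suc t)) [0..<T])))
     = real T * (mu + cV + real n)" for n zb a0 T
    by (induction T) (simp_all add: cost_hit algebra_simps)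
  have b: "sum_list (map (icost mu cU cV cH) (map (\<lambda>j. CallB [n*j..<n*j+n]) [0..<T])) = real T * mu" for n T
    unfolding map_map by (subst sum_list_const[where c=mu]) auto
  have u: "sum_list (map (icost mu cU cV cH) (map (\<lambda>j. CallU [n*j..<n*j+n]) [0..<T])) = real T * cU" for n T
    unfolding map_map by (subst sum_list_const[where c=cU]) auto
  show ?thesis using assms
    unfolding cost_def progB_def Let_def fst_conv map_append sum_list_append h b u
    by (simp add: algebra_simps of_nat_diff)
qed

lemma log_pow_mono: assumes "a \<le> b" shows "log 2 (real a + 2) ^ k \<le> log 2 (real b + 2) ^ k"
proof (rule power_mono)
  show "log 2 (real a + 2) \<le> log 2 (real b + 2)" using assms by simp
  show "0 \<le> log 2 (real a + 2)" by simp
qed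

lemma cost_bound:
  assumes m: "0 < m" and s: "0 < s" and n: "n = m * s"
    and cU: "0 \<le> cU" "cU \<le> c * (1 + otil k n)"
    and cV: "0 \<le> cV" "cV \<le> c * (1 + otil k n)"
    and cH: "0 \<le> cH" "cH \<le> c * (1 + otil k (n * s))"
  shows "real m * cU + real m * cV + cH + real (m - 1) * real n \<le> (5 * max c 0 + 1) * (1 + otil k (n * (m + s)))"
proof -
  define N where "N = n * (m + s)"
  define L where "L = log 2 (real N + 2) ^ k"
  define c' where "c' = max c 0"
  have c'0: "0 \<le> c'" by (simp add: c'_def)
  have L1: "1 \<le> L" unfolding L_def by (rule one_le_power) simp
  have n1: "1 \<le> n" using m s n by (simp add: Suc_le_eq)
  have mN: "m \<le> N"
  proof -
    have "1 * (m + s) \<le> n * (m + s)" by (rule mult_le_mono1[OF n1])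
    then have "m + s \<le> N" by (simp only: N_def mult_1)
    then show ?thesis by linarith
  qed
  have mnN: "m * n \<le> N" by (simp add: N_def algebra_simps)
  have nN: "n \<le> N"
  proof -
    have "n * 1 \<le> n * (m + s)" using m by (intro mult_le_mono2) simp
    then show ?thesis by (simp add: N_def)
  qed
  have nsN: "n * s \<le> N" by (simp add: N_def algebra_simps)
  have oN: "otil k N = real N * L" by (simp add: otil_def L_def)
  have on: "otil k n \<le> real n * L" unfolding otil_def L_def
    by (rule mult_left_mono[OF log_pow_mono[OF nN]]) simp
  have ons: "otil k (n * s) \<le> real N * L"
  proof -
    have "otil k (n * s) \<le> real (n * s) * L" unfolding otil_def L_def
      by (rule mult_left_mono[OF log_pow_mono[OF nsN]]) simp
    also have "\<dots> \<le> real N * L" using of_nat_mono[OF nsN] L1 by (intro mult_right_mono) auto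
    finally show ?thesis .
  qed
  have o0: "0 \<le> otil k x" for x by (simp add: otil_def)
  have cc: "c * (1 + otil k x) \<le> c' * (1 + otil k x)" for x
    using o0[of x] by (intro mult_right_mono) (auto simp: c'_def)
  have U1: "cU \<le> c' * (1 + real n * L)"
    using cU(2) cc[of n] mult_left_mono[OF on c'0] by (simp add: algebra_simps)
  have V1: "cV \<le> c' * (1 + real n * L)"
    using cV(2) cc[of n] mult_left_mono[OF on c'0] by (simp add: algebra_simps)
  have H1: "cH \<le> c' * (1 + real N * L)"
    using cH(2) cc[of "n*s"] mult_left_mono[OF ons c'0] by (simp add: algebra_simps)
  have NL: "real N \<le> real N * L" using L1 by (simp add: mult_le_cancel_left1)
  have mL: "real m \<le> real N * L" using mN NL by linarith
  have mnL: "real m * (real n * L) \<le> real N * L"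
  proof -
    have "real m * real n \<le> real N" using of_nat_mono[OF mnN] by simp
    then have "(real m * real n) * L \<le> real N * L" using L1 by (intro mult_right_mono) auto
    then show ?thesis by (simp add: mult.assoc)
  qed
  have A: "real m * cU \<le> c' * (2 * (real N * L))"
  proof -
    have "real m * cU \<le> real m * (c' * (1 + real n * L))" using U1 by (intro mult_left_mono) auto
    also have "\<dots> = c' * (real m + real m * (real n * L))" by (simp add: algebra_simps)
    also have "\<dots> \<le> c' * (2 * (real N * L))" using mL mnL c'0 by (intro mult_left_mono) auto
    finally show ?thesis .
  qed
  have A2: "real m * cV \<le> c' * (2 * (real N * L))"
  proof -
    have "real m * cV \<le> real m * (c' * (1 + real n * L))" using V1 by (intro mult_left_mono) auto
    also have "\<dots> = c' * (real m + real m * (real n * L))" by (simp add: algebra_simps)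
    also have "\<dots> \<le> c' * (2 * (real N * L))" using mL mnL c'0 by (intro mult_left_mono) auto
    finally show ?thesis .
  qed
  have A3: "real (m - 1) * real n \<le> real N * L"
  proof -
    have "(m - 1) * n \<le> m * n" by (rule mult_le_mono1) simp
    then have "(m - 1) * n \<le> N" using mnN by (rule le_trans)
    then have "real ((m - 1) * n) \<le> real N" by (rule of_nat_mono)
    then show ?thesis using NL by simp
  qed
  have "real m * cU + real m * cV + cH + real (m - 1) * real n
      \<le> c' * (2 * (real N * L)) + c' * (2 * (real N * L)) + c' * (1 + real N * L) + real N * L"
    using A A2 H1 A3 by linarith
  also have "\<dots> = (5 * c' + 1) * (real N * L) + c'" by (simp add: algebra_simps)
  also have "\<dots> \<le> (5 * c' + 1) * (1 + real N * L)" using c'0 by (simp add: algebra_simps)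
  finally show ?thesis unfolding c'_def[symmetric] N_def[symmetric] oN .
qed

lemma inner:
  assumes p: "prime p" and m: "0 < m" and s: "0 < s"
    and B: "B \<in> carrier_mat (m*s) (m*s)" and u: "u \<in> carrier_mat s (m*s)" and v: "v \<in> carrier_mat (m*s) s"
    and U: "nonsingular_modp p (blockU m s B u)"
    and oB: "\<forall>w. length w = m*s \<and> in_range p w \<longrightarrow> oB w = mvp p B w"
    and oU: "\<forall>w. length w = m*s \<and> in_range p w \<longrightarrow> oU w = mvp p u w"
    and oV: "\<forall>x. length x = s \<and> in_range p x \<longrightarrow> oV x = mvp p v x"
    and oH: "\<forall>y. length y = m*s \<and> in_range p y \<longrightarrow>
          length (oH y) = m*s \<and> in_range p (oH y) \<and> mvp p (blockU m s B u * B * blockV m s B v) (oH y) = y"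
    and w: "length w = m*s \<and> in_range p w"
  shows "length (run p oB oU oV oH (progB m s) w) = m*s \<and> in_range p (run p oB oU oV oH (progB m s) w)
    \<and> mvp p B (run p oB oU oV oH (progB m s) w) = w"
  using prog_correct[OF p m s refl B u v U oB oU oV oH conjunct1[OF w] conjunct2[OF w]] .

lemma inner_cost:
  assumes m: "0 < m" and s: "0 < s" and mu: "0 \<le> mu"
    and cU: "0 \<le> cU" "cU \<le> c * (1 + otil k (m*s))"
    and cV: "0 \<le> cV" "cV \<le> c * (1 + otil k (m*s))"
    and cH: "0 \<le> cH" "cH \<le> c * (1 + otil k (m * s * s))"
  shows "cost mu cU cV cH (progB m s) \<le> 2 * real (m - 1) * mu + (5 * max c 0 + 1) * (1 + otil k (m * s * (m + s)))"
proof -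
  have e: "cost mu cU cV cH (progB m s) =
    2 * real (m - 1) * mu + real m * cU + real m * cV + cH + real (m - 1) * real (m * s)"
    by (rule cost_progB[OF m])
  have b: "real m * cU + real m * cV + cH + real (m - 1) * real (m * s) \<le> (5 * max c 0 + 1) * (1 + otil k (m * s * (m + s)))"
    by (rule cost_bound[OF m s refl cU cV cH])
  show ?thesis unfolding e using b by linarith
qed

lemma mvp_empty: assumes "B \<in> carrier_mat 0 0" shows "mvp p B x = []"
proof -
  have "dim_row B = 0" using assms by (rule carrier_matD)
  then have "length (mvp p B x) = 0" by simp
  then show ?thesis by blast
qed

lemma otil_nonneg: "0 \<le> otil k x" by (simp add: otil_def)

theorem mainTheorem4:
  fixes c :: real and k :: nat
  shows "\<exists>C :: real. \<exists>K :: nat. \<forall>(p::int) (m::nat) (s::nat). prime p \<longrightarrow>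
    (\<exists>P :: prog. \<forall>(B::int mat) (u::int mat) (v::int mat) (oB::bbox) (oU::bbox) (oV::bbox) (oH::bbox)
        (mu::real) (cU::real) (cV::real) (cH::real).
      let n = m * s; U = blockU m s B u; V = blockV m s B v; H = U * B * V in
      B \<in> carrier_mat n n \<longrightarrow> u \<in> carrier_mat s n \<longrightarrow> v \<in> carrier_mat n s \<longrightarrow>
      nonsingular_modp p B \<longrightarrow> nonsingular_modp p U \<longrightarrow> nonsingular_modp p V \<longrightarrow>
      (\<forall>w. length w = n \<and> in_range p w \<longrightarrow> oB w = mvp p B w) \<longrightarrow>
      (\<forall>w. length w = n \<and> in_range p w \<longrightarrow> oU w = mvp p u w) \<longrightarrow>
      (\<forall>x. length x = s \<and> in_range p x \<longrightarrow> oV x = mvp p v x) \<longrightarrow>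
      (\<forall>y. length y = n \<and> in_range p y \<longrightarrow>
          length (oH y) = n \<and> in_range p (oH y) \<and> mvp p H (oH y) = y) \<longrightarrow>
      0 \<le> mu \<longrightarrow> 0 \<le> cU \<longrightarrow> 0 \<le> cV \<longrightarrow> 0 \<le> cH \<longrightarrow>
      cU \<le> c * (1 + otil k n) \<longrightarrow> cV \<le> c * (1 + otil k n) \<longrightarrow>
      cH \<le> c * (1 + otil k (n * s)) \<longrightarrow>
      cost mu cU cV cH P \<le> 2 * real (m - 1) * mu + C * (1 + otil K (n * (m + s))) \<and>
      (\<forall>w. length w = n \<and> in_range p w \<longrightarrow>
         (let x = run p oB oU oV oH P w in
            length x = n \<and> in_range p x \<and> mvp p B x = w)))"
proof (intro exI[of _ "5 * max c 0 + 1"] exI[of _ k] allI impI)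
  fix p :: int and m s :: nat
  assume p: "prime p"
  show "\<exists>P :: prog. \<forall>(B::int mat) (u::int mat) (v::int mat) (oB::bbox) (oU::bbox) (oV::bbox) (oH::bbox)
        (mu::real) (cU::real) (cV::real) (cH::real).
      let n = m * s; U = blockU m s B u; V = blockV m s B v; H = U * B * V in
      B \<in> carrier_mat n n \<longrightarrow> u \<in> carrier_mat s n \<longrightarrow> v \<in> carrier_mat n s \<longrightarrow>
      nonsingular_modp p B \<longrightarrow> nonsingular_modp p U \<longrightarrow> nonsingular_modp p V \<longrightarrow>
      (\<forall>w. length w = n \<and> in_range p w \<longrightarrow> oB w = mvp p B w) \<longrightarrow>
      (\<forall>w. length w = n \<and> in_range p w \<longrightarrow> oU w = mvp p u w) \<longrightarrow>
      (\<forall>x. length x = s \<and> in_range p x \<longrightarrow> oV x = mvp p v x) \<longrightarrow>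
      (\<forall>y. length y = n \<and> in_range p y \<longrightarrow>
          length (oH y) = n \<and> in_range p (oH y) \<and> mvp p H (oH y) = y) \<longrightarrow>
      0 \<le> mu \<longrightarrow> 0 \<le> cU \<longrightarrow> 0 \<le> cV \<longrightarrow> 0 \<le> cH \<longrightarrow>
      cU \<le> c * (1 + otil k n) \<longrightarrow> cV \<le> c * (1 + otil k n) \<longrightarrow>
      cH \<le> c * (1 + otil k (n * s)) \<longrightarrow>
      cost mu cU cV cH P \<le> 2 * real (m - 1) * mu + (5 * max c 0 + 1) * (1 + otil k (n * (m + s))) \<and>
      (\<forall>w. length w = n \<and> in_range p w \<longrightarrow>
         (let x = run p oB oU oV oH P w in
            length x = n \<and> in_range p x \<and> mvp p B x = w))"
  proof (cases "0 < m \<and> 0 < s")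
    case True
    then have m: "0 < m" and s: "0 < s" by auto
    show ?thesis
      unfolding Let_def
      apply (rule exI[of _ "progB m s"])
      apply (intro allI impI conjI)
      subgoal by (rule inner_cost[OF m s]) assumption+
      subgoal by (rule inner[OF p m s, THEN conjunct1]) assumption+
      subgoal by (rule inner[OF p m s, THEN conjunct2, THEN conjunct1]) assumption+
      subgoal by (rule inner[OF p m s, THEN conjunct2, THEN conjunct2]) assumption+
      done
  next
    case False
    then have ms: "m * s = 0" by auto
    have C0: "0 \<le> 5 * max c 0 + 1" by simp
    show ?thesis
      unfolding Let_def ms
      apply (rule exI[of _ "([], [])"])
      apply (intro allI impI conjI)
      subgoal for B u v oB oU oV oH mu cU cV cH
        using otil_nonneg[of k "0 * (m + s)"] C0
        by (simp add: cost_def)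
      subgoal by (simp add: run_def)
      subgoal by (simp add: run_def in_range_def)
      subgoal by (simp add: run_def mvp_empty)
      done
  qed
qed

end
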